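(* Let $\mathbf A$ be a finite relational structure with a majority polymorphism and a Maltsev polymorphism, and let $\mathcal A=\mathcal V(\mathrm{Alg}(\mathbf A))$. Let $\mathcal I=(V,\{\mathbb A_x\},\{R_{xy}\},w)$ be an instance of $\mathrm{CSP}(\mathcal A)$ as in the context with $|V|>1$, such that every domain $\mathbb A_x$ either has exactly one element or is subdirectly irreducible and prime. Then for every $x\in V$ there is a variable $y\ne x$ with $\theta_{xy}=0_{A_x}$, and for any such $y$ the relation $R_{yx}$ is the graph of a surjective homomorphism from $\mathbb A_y$ onto $\mathbb A_x$.
   Context: $\mathrm{Alg}(\mathbf A)$ is the algebra on $A$ whose operations are all polymorphisms of $\mathbf A$; $\mathcal V(\cdot)$ denotes the generated variety. An instance of $\mathrm{CSP}(\mathcal A)$ considered here is $(V,\{\mathbb A_x\}_{x\in V},\{R_{xy}\}_{(x,y)\in V^2},w)$: for each variable $x$ a finite algebra $\mathbb A_x\in\mathcal A$ with universe $A_x$; for each pair $(x,y)$ a binary relation $R_{xy}$ that is the universe of a subalgebra of $\mathbb A_x\times\mathbb A_y$, with $R_{xx}$ the equality relation $0_{A_x}$, $R_{yx}=R_{xy}^{-1}$, and for $x\ne y$, $R_{xy}$ subdirect (both projections onto). For $x\ne y$, $\theta_{xy}=\{(a,a')\in A_x^2\mid\exists b\in A_y:(a,b),(a',b)\in R_{xy}\}$, $\mu_x=\bigwedge_{y\ne x}\theta_{xy}$; $\mathbb A_x$ is prime if $\mu_x=0_{A_x}$. An algebra is subdirectly irreducible if it has at least two elements and the intersection of its nontrivial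 (non-equality) congruences is not the equality relation. *)

theory Defs
  imports Main
begin

definition rel_structure :: "'a set \<Rightarrow> (nat \<times> 'a list set) set \<Rightarrow> bool" where
  "rel_structure A Rels \<longleftrightarrow>
     (\<forall>(m, R) \<in> Rels. \<forall>xs \<in> R. length xs = m \<and> set xs \<subseteq> A)"

type_synonym 'a opsym = "nat \<times> ('a list \<Rightarrow> 'a)"

definition arity :: "'a opsym \<Rightarrow> nat" where
  "arity s = fst s"

definition is_pol :: "'a set \<Rightarrow> (nat \<times> 'a list set) set \<Rightarrow> 'a opsym \<Rightarrow> bool" where
  "is_pol A Rels s \<longleftrightarrow>
     (\<forall>xs. length xs = fst s \<and> set xs \<subseteq> A \<longrightarrow> snd s xs \<in> A) \<and>
     (\<forall>(m, R) \<in> Rels. \<forall>rs. length rs = fst s \<and> set rs \<subseteq> R \<longrightarrow>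
         map (\<lambda>i. snd s (map (\<lambda>r. r ! i) rs)) [0..<m] \<in> R)"

definition has_majority_pol :: "'a set \<Rightarrow> (nat \<times> 'a list set) set \<Rightarrow> bool" where
  "has_majority_pol A Rels \<longleftrightarrow>
     (\<exists>f. is_pol A Rels (3, f) \<and>
        (\<forall>x\<in>A. \<forall>y\<in>A. f [x, x, y] = x \<and> f [x, y, x] = x \<and> f [y, x, x] = x))"

definition has_maltsev_pol :: "'a set \<Rightarrow> (nat \<times> 'a list set) set \<Rightarrow> bool" where
  "has_maltsev_pol A Rels \<longleftrightarrow>
     (\<exists>f. is_pol A Rels (3, f) \<and>
        (\<forall>x\<in>A. \<forall>y\<in>A. f [x, y, y] = x \<and> f [y, y, x] = x))"

text \<open>The signature of Alg(A) consists of the polymorphism symbols.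
  An algebra of this signature: a nonempty carrier B and an interpretation I.\<close>

definition is_algebra :: "('f \<Rightarrow> bool) \<Rightarrow> ('f \<Rightarrow> nat) \<Rightarrow> 'b set \<Rightarrow> ('f \<Rightarrow> 'b list \<Rightarrow> 'b) \<Rightarrow> bool" where
  "is_algebra S ar B I \<longleftrightarrow> B \<noteq> {} \<and>
     (\<forall>f. S f \<longrightarrow> (\<forall>xs. length xs = ar f \<and> set xs \<subseteq> B \<longrightarrow> I f xs \<in> B))"

datatype 'f trm = Var nat | App 'f "'f trm list"

fun eval_trm :: "('f \<Rightarrow> 'b list \<Rightarrow> 'b) \<Rightarrow> (nat \<Rightarrow> 'b) \<Rightarrow> 'f trm \<Rightarrow> 'b" where
  "eval_trm I \<sigma> (Var n) = \<sigma> n"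
| "eval_trm I \<sigma> (App f ts) = I f (map (eval_trm I \<sigma>) ts)"

fun wf_trm :: "('f \<Rightarrow> bool) \<Rightarrow> ('f \<Rightarrow> nat) \<Rightarrow> 'f trm \<Rightarrow> bool" where
  "wf_trm S ar (Var n) = True"
| "wf_trm S ar (App f ts) = (S f \<and> length ts = ar f \<and> (\<forall>t \<in> set ts. wf_trm S ar t))"

definition satisfies_id :: "'b set \<Rightarrow> ('f \<Rightarrow> 'b list \<Rightarrow> 'b) \<Rightarrow> 'f trm \<Rightarrow> 'f trm \<Rightarrow> bool" where
  "satisfies_id B I s t \<longleftrightarrow> (\<forall>\<sigma>. (\<forall>n. \<sigma> n \<in> B) \<longrightarrow> eval_trm I \<sigma> s = eval_trm I \<sigma> t)"

text \<open>The algebra Alg(A): carrier A, each polymorphism symbol (n,f) interpreted by f.\<close>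
definition alg_ops :: "'a opsym \<Rightarrow> 'a list \<Rightarrow> 'a" where
  "alg_ops s xs = snd s xs"

text \<open>Membership in the variety V(Alg(A)) generated by Alg(A), defined (via Birkhoff's
  theorem) as: an algebra of the signature satisfying every (well-formed) identity
  that holds in Alg(A).\<close>
definition in_variety :: "'a set \<Rightarrow> (nat \<times> 'a list set) set \<Rightarrow> 'b set \<Rightarrow> ('a opsym \<Rightarrow> 'b list \<Rightarrow> 'b) \<Rightarrow> bool" where
  "in_variety A Rels B I \<longleftrightarrow>
     is_algebra (is_pol A Rels) arity B I \<and>
     (\<forall>s t. wf_trm (is_pol A Rels) arity s \<and> wf_trm (is_pol A Rels) arity t \<and>
            satisfies_id A alg_ops s t \<longrightarrow> satisfies_id B I s t)"

definition is_congruence :: "('f \<Rightarrow> bool) \<Rightarrow> ('f \<Rightarrow> nat) \<Rightarrow> 'b set \<Rightarrow> ('f \<Rightarrow> 'b list \<Rightarrow> 'b) \<Rightarrow> ('b \<times> 'b) set \<Rightarrow> bool" where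
  "is_congruence S ar B I \<theta> \<longleftrightarrow> equiv B \<theta> \<and>
     (\<forall>f. S f \<longrightarrow> (\<forall>ps. length ps = ar f \<and> set ps \<subseteq> \<theta> \<longrightarrow>
        (I f (map fst ps), I f (map snd ps)) \<in> \<theta>))"

definition subdirectly_irreducible :: "('f \<Rightarrow> bool) \<Rightarrow> ('f \<Rightarrow> nat) \<Rightarrow> 'b set \<Rightarrow> ('f \<Rightarrow> 'b list \<Rightarrow> 'b) \<Rightarrow> bool" where
  "subdirectly_irreducible S ar B I \<longleftrightarrow> 2 \<le> card B \<and>
     \<Inter> {\<theta>. is_congruence S ar B I \<theta> \<and> \<theta> \<noteq> Id_on B} \<noteq> Id_on B"

definition is_hom :: "('f \<Rightarrow> bool) \<Rightarrow> ('f \<Rightarrow> nat) \<Rightarrow> 'b set \<Rightarrow> ('f \<Rightarrow> 'b list \<Rightarrow> 'b) \<Rightarrow> 'c set \<Rightarrow> ('f \<Rightarrow> 'c list \<Rightarrow> 'c) \<Rightarrow> ('b \<Rightarrow> 'c) \<Rightarrow> bool" where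
  "is_hom S ar B I C J h \<longleftrightarrow> h ` B \<subseteq> C \<and>
     (\<forall>f. S f \<longrightarrow> (\<forall>xs. length xs = ar f \<and> set xs \<subseteq> B \<longrightarrow> h (I f xs) = J f (map h xs)))"

definition is_subalg_prod :: "('f \<Rightarrow> bool) \<Rightarrow> ('f \<Rightarrow> nat) \<Rightarrow> 'b set \<Rightarrow> ('f \<Rightarrow> 'b list \<Rightarrow> 'b) \<Rightarrow> 'c set \<Rightarrow> ('f \<Rightarrow> 'c list \<Rightarrow> 'c) \<Rightarrow> ('b \<times> 'c) set \<Rightarrow> bool" where
  "is_subalg_prod S ar B I C J R \<longleftrightarrow> R \<subseteq> B \<times> C \<and>
     (\<forall>f. S f \<longrightarrow> (\<forall>ps. length ps = ar f \<and> set ps \<subseteq> R \<longrightarrow>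
        (I f (map fst ps), J f (map snd ps)) \<in> R))"

definition theta_rel :: "'b set \<Rightarrow> ('b \<times> 'b) set \<Rightarrow> ('b \<times> 'b) set" where
  "theta_rel Ax Rxy = {(a, a'). a \<in> Ax \<and> a' \<in> Ax \<and> (\<exists>b. (a, b) \<in> Rxy \<and> (a', b) \<in> Rxy)}"

definition mu_rel :: "'v set \<Rightarrow> ('v \<Rightarrow> 'b set) \<Rightarrow> ('v \<Rightarrow> 'v \<Rightarrow> ('b \<times> 'b) set) \<Rightarrow> 'v \<Rightarrow> ('b \<times> 'b) set" where
  "mu_rel V Ax R x = \<Inter> {theta_rel (Ax x) (R x y) | y. y \<in> V \<and> y \<noteq> x}"

definition csp_instance :: "'a set \<Rightarrow> (nat \<times> 'a list set) set \<Rightarrow> 'v set \<Rightarrow> ('v \<Rightarrow> 'b set) \<Rightarrow>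
    ('v \<Rightarrow> 'a opsym \<Rightarrow> 'b list \<Rightarrow> 'b) \<Rightarrow> ('v \<Rightarrow> 'v \<Rightarrow> ('b \<times> 'b) set) \<Rightarrow> bool" where
  "csp_instance A Rels V Ax Ix R \<longleftrightarrow> finite V \<and>
     (\<forall>x\<in>V. finite (Ax x) \<and> in_variety A Rels (Ax x) (Ix x)) \<and>
     (\<forall>x\<in>V. R x x = Id_on (Ax x)) \<and>
     (\<forall>x\<in>V. \<forall>y\<in>V. R y x = (R x y)\<inverse>) \<and>
     (\<forall>x\<in>V. \<forall>y\<in>V. is_subalg_prod (is_pol A Rels) arity (Ax x) (Ix x) (Ax y) (Ix y) (R x y)) \<and>
     (\<forall>x\<in>V. \<forall>y\<in>V. x \<noteq> y \<longrightarrow> fst ` R x y = Ax x \<and> snd ` R x y = Ax y)"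

end

theory Submission
  imports Defs
begin

lemma maltsev_in_var:
  assumes iv: "in_variety A Rels B I" and p: "is_pol A Rels (3, f)"
    and m: "\<forall>x\<in>A. \<forall>y\<in>A. f [x, y, y] = x \<and> f [y, y, x] = x"
    and a: "a \<in> B" and c: "c \<in> B"
  shows "I (3, f) [a, c, c] = a" "I (3, f) [c, c, a] = a"
proof -
  define \<sigma> where "\<sigma> = (\<lambda>n::nat. if n = 0 then a else c)"
  have s: "\<forall>n. \<sigma> n \<in> B" using a c by (simp add: \<sigma>_def)
  have w1: "wf_trm (is_pol A Rels) arity (App (3, f) [Var 0, Var 1, Var 1])"
    using p by (simp add: arity_def)
  have w2: "wf_trm (is_pol A Rels) arity (App (3, f) [Var 1, Var 1, Var 0])"
    using p by (simp add: arity_def)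
  have w0: "wf_trm (is_pol A Rels) arity (Var 0)" by simp
  have i1: "satisfies_id A alg_ops (App (3, f) [Var 0, Var 1, Var 1]) (Var 0)"
    using m by (simp add: satisfies_id_def alg_ops_def)
  have i2: "satisfies_id A alg_ops (App (3, f) [Var 1, Var 1, Var 0]) (Var 0)"
    using m by (simp add: satisfies_id_def alg_ops_def)
  have "satisfies_id B I (App (3, f) [Var 0, Var 1, Var 1]) (Var 0)"
    using iv w1 w0 i1 unfolding in_variety_def by blast
  then have "eval_trm I \<sigma> (App (3, f) [Var 0, Var 1, Var 1]) = eval_trm I \<sigma> (Var 0)"
    using s unfolding satisfies_id_def by blast
  then show "I (3, f) [a, c, c] = a" by (simp add: \<sigma>_def)
  have "satisfies_id B I (App (3, f) [Var 1, Var 1, Var 0]) (Var 0)"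
    using iv w2 w0 i2 unfolding in_variety_def by blast
  then have "eval_trm I \<sigma> (App (3, f) [Var 1, Var 1, Var 0]) = eval_trm I \<sigma> (Var 0)"
    using s unfolding satisfies_id_def by blast
  then show "I (3, f) [c, c, a] = a" by (simp add: \<sigma>_def)
qed

lemma theta_cong:
  assumes iv1: "in_variety A Rels Bx Ixx" and iv2: "in_variety A Rels By Iy"
    and mal: "has_maltsev_pol A Rels"
    and sub: "is_subalg_prod (is_pol A Rels) arity Bx Ixx By Iy Rxy"
    and sd: "fst ` Rxy = Bx"
  shows "is_congruence (is_pol A Rels) arity Bx Ixx (theta_rel Bx Rxy)"
proof -
  obtain f where p: "is_pol A Rels (3, f)" and m: "\<forall>x\<in>A. \<forall>y\<in>A. f [x, y, y] = x \<and> f [y, y, x] = x"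
    using mal unfolding has_maltsev_pol_def by blast
  have RB: "Rxy \<subseteq> Bx \<times> By" using sub unfolding is_subalg_prod_def by blast
  have cl: "\<And>g ps. is_pol A Rels g \<Longrightarrow> length ps = arity g \<Longrightarrow> set ps \<subseteq> Rxy \<Longrightarrow>
      (Ixx g (map fst ps), Iy g (map snd ps)) \<in> Rxy"
    using sub unfolding is_subalg_prod_def by blast
  have tr: "trans (theta_rel Bx Rxy)"
  proof (rule transI)
    fix a a' a'' assume "(a, a') \<in> theta_rel Bx Rxy" "(a', a'') \<in> theta_rel Bx Rxy"
    then obtain b b' where h: "(a, b) \<in> Rxy" "(a', b) \<in> Rxy" "(a', b') \<in> Rxy" "(a'', b') \<in> Rxy"
      and ab: "a \<in> Bx" "a' \<in> Bx" "a'' \<in> Bx"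
      unfolding theta_rel_def by blast
    have bb: "b \<in> By" "b' \<in> By" using h RB by auto
    have "(Ixx (3, f) (map fst [(a, b), (a', b), (a', b')]), Iy (3, f) (map snd [(a, b), (a', b), (a', b')])) \<in> Rxy"
      by (rule cl[OF p]) (use h in \<open>auto simp: arity_def\<close>)
    then have "(Ixx (3, f) [a, a', a'], Iy (3, f) [b, b, b']) \<in> Rxy" by simp
    then have "(a, b') \<in> Rxy"
      using maltsev_in_var[OF iv1 p m ab(1) ab(2)] maltsev_in_var[OF iv2 p m bb(2) bb(1)] by simp
    then show "(a, a'') \<in> theta_rel Bx Rxy" using h(4) ab unfolding theta_rel_def by blast
  qed
  have rf: "refl_on Bx (theta_rel Bx Rxy)"
  proof (rule refl_onI)
    fix a assume "a \<in> Bx"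
    then obtain b where "(a, b) \<in> Rxy" using sd by force
    then show "(a, a) \<in> theta_rel Bx Rxy" using \<open>a \<in> Bx\<close> unfolding theta_rel_def by blast
  qed
  have sy: "sym (theta_rel Bx Rxy)" unfolding theta_rel_def sym_def by blast
  have sb: "theta_rel Bx Rxy \<subseteq> Bx \<times> Bx" unfolding theta_rel_def by blast
  have eq: "equiv Bx (theta_rel Bx Rxy)" using sb rf sy tr by (rule equivI)
  have comp: "(Ixx g (map fst ps), Ixx g (map snd ps)) \<in> theta_rel Bx Rxy"
    if g: "is_pol A Rels g" and l: "length ps = arity g" and ps: "set ps \<subseteq> theta_rel Bx Rxy" for g ps
  proof -
    define bf where "bf = (\<lambda>q. SOME b. (fst q, b) \<in> Rxy \<and> (snd q, b) \<in> Rxy)"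
    have bf: "(fst q, bf q) \<in> Rxy \<and> (snd q, bf q) \<in> Rxy" if "q \<in> set ps" for q
    proof -
      have "\<exists>b. (fst q, b) \<in> Rxy \<and> (snd q, b) \<in> Rxy" using ps that unfolding theta_rel_def by (cases q) auto
      then show ?thesis unfolding bf_def by (rule someI_ex)
    qed
    have c1: "(Ixx g (map fst (map (\<lambda>q. (fst q, bf q)) ps)), Iy g (map snd (map (\<lambda>q. (fst q, bf q)) ps))) \<in> Rxy"
      by (rule cl[OF g]) (use l bf in auto)
    have c2: "(Ixx g (map fst (map (\<lambda>q. (snd q, bf q)) ps)), Iy g (map snd (map (\<lambda>q. (snd q, bf q)) ps))) \<in> Rxy"
      by (rule cl[OF g]) (use l bf in auto)
    have d1: "(Ixx g (map fst ps), Iy g (map bf ps)) \<in> Rxy" using c1 by (simp add: comp_def)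
    have d2: "(Ixx g (map snd ps), Iy g (map bf ps)) \<in> Rxy" using c2 by (simp add: comp_def)
    show ?thesis using d1 d2 RB unfolding theta_rel_def by blast
  qed
  show ?thesis unfolding is_congruence_def
  proof (intro conjI allI impI eq)
    fix g ps assume "is_pol A Rels g" "length ps = arity g \<and> set ps \<subseteq> theta_rel Bx Rxy"
    then show "(Ixx g (map fst ps), Ixx g (map snd ps)) \<in> theta_rel Bx Rxy"
      using comp by blast
  qed
qed

theorem mainTheorem7:
  fixes A :: "'a set" and Rels :: "(nat \<times> 'a list set) set"
    and V :: "'v set" and Ax :: "'v \<Rightarrow> 'b set"
    and Ix :: "'v \<Rightarrow> 'a opsym \<Rightarrow> 'b list \<Rightarrow> 'b"
    and R :: "'v \<Rightarrow> 'v \<Rightarrow> ('b \<times> 'b) set"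
  assumes "finite A" and "rel_structure A Rels"
    and "has_majority_pol A Rels" and "has_maltsev_pol A Rels"
    and "csp_instance A Rels V Ax Ix R"
    and "card V > 1"
    and "\<forall>x\<in>V. card (Ax x) = 1 \<or>
           (subdirectly_irreducible (is_pol A Rels) arity (Ax x) (Ix x) \<and>
            mu_rel V Ax R x = Id_on (Ax x))"
  shows "\<forall>x\<in>V. (\<exists>y\<in>V. y \<noteq> x \<and> theta_rel (Ax x) (R x y) = Id_on (Ax x)) \<and>
           (\<forall>y\<in>V. y \<noteq> x \<and> theta_rel (Ax x) (R x y) = Id_on (Ax x) \<longrightarrow>
              (\<exists>h. is_hom (is_pol A Rels) arity (Ax y) (Ix y) (Ax x) (Ix x) h \<and>
                   h ` Ax y = Ax x \<and> R y x = {(b, h b) | b. b \<in> Ax y}))"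
proof -
  note C = assms(5)[unfolded csp_instance_def]
  note C1 = C[THEN conjunct2, THEN conjunct1]
  note C3 = C[THEN conjunct2, THEN conjunct2, THEN conjunct2, THEN conjunct1]
  note C4 = C[THEN conjunct2, THEN conjunct2, THEN conjunct2, THEN conjunct2, THEN conjunct1]
  note C5 = C[THEN conjunct2, THEN conjunct2, THEN conjunct2, THEN conjunct2, THEN conjunct2]
  have I1: "\<And>x. x \<in> V \<Longrightarrow> in_variety A Rels (Ax x) (Ix x)"
    using C1[rule_format] by blast
  have I2: "\<And>x y. x \<in> V \<Longrightarrow> y \<in> V \<Longrightarrow> R y x = (R x y)\<inverse>"
    by (rule C3[rule_format])
  have I3: "\<And>x y. x \<in> V \<Longrightarrow> y \<in> V \<Longrightarrow> is_subalg_prod (is_pol A Rels) arity (Ax x) (Ix x) (Ax y) (Ix y) (R x y)"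
    by (rule C4[rule_format])
  have I4: "\<And>x y. x \<in> V \<Longrightarrow> y \<in> V \<Longrightarrow> x \<noteq> y \<Longrightarrow> fst ` R x y = Ax x"
    using C5[rule_format] by blast
  have I5: "\<And>x y. x \<in> V \<Longrightarrow> y \<in> V \<Longrightarrow> x \<noteq> y \<Longrightarrow> snd ` R x y = Ax y"
    using C5[rule_format] by blast
  show ?thesis
proof (intro ballI conjI impI)
  fix x assume xV: "x \<in> V"
  have cong: "is_congruence (is_pol A Rels) arity (Ax x) (Ix x) (theta_rel (Ax x) (R x y))"
    if "y \<in> V" "y \<noteq> x" for y
    by (rule theta_cong[OF I1[OF xV] I1[OF that(1)] assms(4) I3[OF xV that(1)] I4[OF xV that(1)]]) (use that in auto)
  have idsub: "Id_on (Ax x) \<subseteq> theta_rel (Ax x) (R x y)" if "y \<in> V" "y \<noteq> x" for y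
  proof -
    have "equiv (Ax x) (theta_rel (Ax x) (R x y))" using cong[OF that] unfolding is_congruence_def by blast
    then have "refl_on (Ax x) (theta_rel (Ax x) (R x y))" by (simp add: equiv_def)
    then show ?thesis unfolding refl_on_def by auto
  qed
  obtain y0 where y0: "y0 \<in> V" "y0 \<noteq> x"
  proof -
    have "\<not> V \<subseteq> {x}"
    proof
      assume "V \<subseteq> {x}"
      then have "card V \<le> card {x}" by (intro card_mono) auto
      then show False using assms(6) by simp
    qed
    then show ?thesis using that by blast
  qed
  show "\<exists>y\<in>V. y \<noteq> x \<and> theta_rel (Ax x) (R x y) = Id_on (Ax x)"
  proof (cases "card (Ax x) = 1")
    case True
    then obtain a where "Ax x = {a}" by (meson card_1_singletonE)
    then have "theta_rel (Ax x) (R x y0) \<subseteq> Id_on (Ax x)" unfolding theta_rel_def by auto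
    then show ?thesis using idsub[OF y0] y0 by blast
  next
    case False
    then have si: "subdirectly_irreducible (is_pol A Rels) arity (Ax x) (Ix x)"
      and mu: "mu_rel V Ax R x = Id_on (Ax x)" using assms(7) xV by auto
    show ?thesis
    proof (rule ccontr)
      assume "\<not> ?thesis"
      then have nt: "theta_rel (Ax x) (R x y) \<noteq> Id_on (Ax x)" if "y \<in> V" "y \<noteq> x" for y
        using that by blast
      let ?C = "{\<theta>. is_congruence (is_pol A Rels) arity (Ax x) (Ix x) \<theta> \<and> \<theta> \<noteq> Id_on (Ax x)}"
      have "\<Inter> ?C \<subseteq> mu_rel V Ax R x"
        unfolding mu_rel_def using cong nt by blast
      moreover have "Id_on (Ax x) \<subseteq> \<theta>" if "\<theta> \<in> ?C" for \<theta>
      proof -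
        have "equiv (Ax x) \<theta>" using that unfolding is_congruence_def by blast
        then have "refl_on (Ax x) \<theta>" by (simp add: equiv_def)
        then show ?thesis unfolding refl_on_def by auto
      qed
      then have "Id_on (Ax x) \<subseteq> \<Inter> ?C" by blast
      ultimately have "\<Inter> ?C = Id_on (Ax x)" using mu by blast
      then show False using si unfolding subdirectly_irreducible_def by blast
    qed
  qed
next
  fix x y assume xV: "x \<in> V" and yV: "y \<in> V" and hy: "y \<noteq> x \<and> theta_rel (Ax x) (R x y) = Id_on (Ax x)"
  have Ryx: "R y x = (R x y)\<inverse>" using I2 xV yV by blast
  have xy: "x \<noteq> y" using hy by auto
  have sdx: "fst ` R x y = Ax x" by (rule I4[OF xV yV xy])
  have sdy: "snd ` R x y = Ax y" by (rule I5[OF xV yV xy])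
  have subyx: "is_subalg_prod (is_pol A Rels) arity (Ax y) (Ix y) (Ax x) (Ix x) (R y x)"
    using I3 xV yV by blast
  have RB: "R x y \<subseteq> Ax x \<times> Ax y"
    using I3[OF xV yV] unfolding is_subalg_prod_def by blast
  have uniq: "a = a'" if "(a, b) \<in> R x y" "(a', b) \<in> R x y" for a a' b
  proof -
    have "(a, a') \<in> theta_rel (Ax x) (R x y)" using that RB unfolding theta_rel_def by blast
    then show ?thesis using hy by auto
  qed
  define h where "h = (\<lambda>b. THE a. (a, b) \<in> R x y)"
  have hR: "(h b, b) \<in> R x y" if bA: "b \<in> Ax y" for b
  proof -
    have "b \<in> snd ` R x y" using sdy bA by simp
    then obtain a where a: "(a, b) \<in> R x y" by force
    have "h b = a" unfolding h_def using a uniq by blast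
    then show ?thesis using a by simp
  qed
  have graph: "R y x = {(b, h b) | b. b \<in> Ax y}"
  proof
    show "R y x \<subseteq> {(b, h b) | b. b \<in> Ax y}"
    proof
      fix q assume "q \<in> R y x"
      then obtain b a where q: "q = (b, a)" "(a, b) \<in> R x y" using Ryx by auto
      then have b: "b \<in> Ax y" using RB by auto
      have "a = h b" using uniq[OF q(2) hR[OF b]] .
      then show "q \<in> {(b, h b) | b. b \<in> Ax y}" using q b by blast
    qed
  next
    show "{(b, h b) | b. b \<in> Ax y} \<subseteq> R y x" using hR Ryx by blast
  qed
  have surj: "h ` Ax y = Ax x"
  proof
    show "h ` Ax y \<subseteq> Ax x" using hR RB by blast
  next
    show "Ax x \<subseteq> h ` Ax y"
    proof
      fix a assume "a \<in> Ax x"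
      then obtain b where ab: "(a, b) \<in> R x y" using sdx by force
      then have b: "b \<in> Ax y" using RB by auto
      have "a = h b" using uniq[OF ab hR[OF b]] .
      then show "a \<in> h ` Ax y" using b by blast
    qed
  qed
  have hom: "is_hom (is_pol A Rels) arity (Ax y) (Ix y) (Ax x) (Ix x) h"
    unfolding is_hom_def
  proof (intro conjI allI impI)
    show "h ` Ax y \<subseteq> Ax x" using surj by simp
  next
    fix g xs assume g: "is_pol A Rels g" and l: "length xs = arity g \<and> set xs \<subseteq> Ax y"
    have "(Ix y g (map fst (map (\<lambda>b. (b, h b)) xs)), Ix x g (map snd (map (\<lambda>b. (b, h b)) xs))) \<in> R y x"
    proof -
      have cl: "\<And>ps. length ps = arity g \<and> set ps \<subseteq> R y x \<Longrightarrow> (Ix y g (map fst ps), Ix x g (map snd ps)) \<in> R y x"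
        using subyx g unfolding is_subalg_prod_def by blast
      have "set (map (\<lambda>b. (b, h b)) xs) \<subseteq> R y x" using l graph by auto
      then show ?thesis using l by (intro cl) simp
    qed
    then have "(Ix y g xs, Ix x g (map h xs)) \<in> R y x" by (simp add: comp_def)
    then show "h (Ix y g xs) = Ix x g (map h xs)" using graph by auto
  qed
  show "\<exists>h. is_hom (is_pol A Rels) arity (Ax y) (Ix y) (Ax x) (Ix x) h \<and>
                   h ` Ax y = Ax x \<and> R y x = {(b, h b) | b. b \<in> Ax y}"
    using hom surj graph by blast
qed
qed

end
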